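(* Let $(X,\pi)$ be a finite symmetric two-player game with relative payoff game $(X,\Delta)$. Then $(X,\Delta)$ is a generalized rock-paper-scissors game if and only if there exists an imitation cycle.
   Context: A symmetric two-player game $(X,\pi)$ has common action set $X$ and payoff $\pi:X\times X\to\mathbb{R}$. Relative payoff: $\Delta(x,y)=\pi(x,y)-\pi(y,x)$, so $(X,\Delta)$ is a symmetric zero-sum game. A symmetric zero-sum game $(Y,\Delta)$ is a generalized rock-paper-scissors matrix if for every $y\in Y$ there is $x\in Y$ with $\Delta(x,y)>0$; $(X,\Delta)$ is a generalized rock-paper-scissors game if some nonempty $\bar X\subseteq X$ makes $(\bar X,\Delta|_{\bar X\times\bar X})$ a generalized rock-paper-scissors matrix. A cycle is a finite sequence of profiles $(x_0,y_0),\dots,(x_n,y_n)$ in $X\times X$, not all equal, with $(x_0,y_0)=(x_n,y_n)$; it is an imitation cycle if for all consecutive profiles $(x_t,y_t),(x_{t+1},y_{t+1})$ on it, $\Delta(x_t,y_t)>0$ and $y_{t+1}=x_t$. *)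

theory Defs
  imports Complex_Main
begin

definition rel_payoff :: "('a \<Rightarrow> 'a \<Rightarrow> real) \<Rightarrow> 'a \<Rightarrow> 'a \<Rightarrow> real" where
  "rel_payoff \<pi> x y = \<pi> x y - \<pi> y x"

definition gen_rps_matrix :: "'a set \<Rightarrow> ('a \<Rightarrow> 'a \<Rightarrow> real) \<Rightarrow> bool" where
  "gen_rps_matrix Y \<Delta> \<longleftrightarrow> (\<forall>y\<in>Y. \<exists>x\<in>Y. \<Delta> x y > 0)"

definition gen_rps_game :: "'a set \<Rightarrow> ('a \<Rightarrow> 'a \<Rightarrow> real) \<Rightarrow> bool" where
  "gen_rps_game X \<Delta> \<longleftrightarrow> (\<exists>Xb. Xb \<noteq> {} \<and> Xb \<subseteq> X \<and> gen_rps_matrix Xb \<Delta>)"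

definition is_cycle :: "'a set \<Rightarrow> nat \<Rightarrow> (nat \<Rightarrow> 'a \<times> 'a) \<Rightarrow> bool" where
  "is_cycle X n p \<longleftrightarrow> (\<forall>t\<le>n. p t \<in> X \<times> X) \<and> p 0 = p n \<and> (\<exists>s\<le>n. \<exists>t\<le>n. p s \<noteq> p t)"

definition is_imitation_cycle ::
  "'a set \<Rightarrow> ('a \<Rightarrow> 'a \<Rightarrow> real) \<Rightarrow> nat \<Rightarrow> (nat \<Rightarrow> 'a \<times> 'a) \<Rightarrow> bool" where
  "is_imitation_cycle X \<Delta> n p \<longleftrightarrow> is_cycle X n p \<and>
     (\<forall>t<n. \<Delta> (fst (p t)) (snd (p t)) > 0 \<and> snd (p (Suc t)) = fst (p t))"

end

theory Submission
  imports Defs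
begin

lemma rel_self: "rel_payoff \<pi> x x = 0" by (simp add: rel_payoff_def)

theorem lemma3:
  fixes X :: "'a set" and \<pi> :: "'a \<Rightarrow> 'a \<Rightarrow> real"
  assumes "finite X"
  shows "gen_rps_game X (rel_payoff \<pi>) \<longleftrightarrow>
         (\<exists>n p. is_imitation_cycle X (rel_payoff \<pi>) n p)"
proof
  assume "gen_rps_game X (rel_payoff \<pi>)"
  then obtain Xb where ne: "Xb \<noteq> {}" and sub: "Xb \<subseteq> X" and m: "gen_rps_matrix Xb (rel_payoff \<pi>)"
    unfolding gen_rps_game_def by blast
  have "\<forall>y\<in>Xb. \<exists>x. x \<in> Xb \<and> rel_payoff \<pi> x y > 0" using m unfolding gen_rps_matrix_def by blast
  then obtain f where f: "\<And>y. y \<in> Xb \<Longrightarrow> f y \<in> Xb \<and> rel_payoff \<pi> (f y) y > 0" by metis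
  obtain y0 where y0: "y0 \<in> Xb" using ne by blast
  define y where "y k = (f ^^ k) y0" for k
  have yin: "y k \<in> Xb" for k unfolding y_def by (induction k) (auto simp: y0 f)
  have ysuc: "y (Suc k) = f (y k)" for k by (simp add: y_def)
  have fin: "finite Xb" using sub assms finite_subset by blast
  have "finite (range y)" using yin fin by (meson finite_subset image_subset_iff)
  hence "\<not> inj y" using finite_imageD by blast
  then obtain a b where "a \<noteq> b" "y a = y b" unfolding inj_def by blast
  then obtain i j where ij: "i < j" "y i = y j" by (metis linorder_neqE_nat)
  have shift: "y (i + k) = y (j + k)" for k
    by (induction k) (auto simp: ij ysuc)
  define n where "n = j - i"
  define p where "p t = (y (i + t + 1), y (i + t))" for t
  have pos: "rel_payoff \<pi> (y (Suc k)) (y k) > 0" for k using f yin ysuc by metis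
  have "is_imitation_cycle X (rel_payoff \<pi>) n p"
    unfolding is_imitation_cycle_def is_cycle_def
  proof (intro conjI allI impI)
    show "p t \<in> X \<times> X" for t using yin sub by (auto simp: p_def)
    show "p 0 = p n" using shift[of 0] shift[of 1] ij by (simp add: p_def n_def)
    show "\<exists>s\<le>n. \<exists>t\<le>n. p s \<noteq> p t"
    proof (intro exI conjI)
      show "0 \<le> n" by simp
      show "1 \<le> n" using ij by (simp add: n_def)
      show "p 0 \<noteq> p 1"
      proof
        assume "p 0 = p 1"
        hence "y (Suc i) = y i" by (simp add: p_def)
        thus False using pos[of i] by (simp add: rel_self)
      qed
    qed
    show "rel_payoff \<pi> (fst (p t)) (snd (p t)) > 0" for t using pos[of "i+t"] by (simp add: p_def)
    show "snd (p (Suc t)) = fst (p t)" for t by (simp add: p_def)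
  qed
  thus "\<exists>n p. is_imitation_cycle X (rel_payoff \<pi>) n p" by blast
next
  assume "\<exists>n p. is_imitation_cycle X (rel_payoff \<pi>) n p"
  then obtain n p where c: "is_cycle X n p"
    and im: "\<And>t. t < n \<Longrightarrow> rel_payoff \<pi> (fst (p t)) (snd (p t)) > 0 \<and> snd (p (Suc t)) = fst (p t)"
    unfolding is_imitation_cycle_def by blast
  have inX: "\<And>t. t \<le> n \<Longrightarrow> p t \<in> X \<times> X" and per: "p 0 = p n"
    and ne: "\<exists>s\<le>n. \<exists>t\<le>n. p s \<noteq> p t" using c unfolding is_cycle_def by auto
  have npos: "n > 0" using ne by (metis le_zero_eq neq0_conv)
  define Xb where "Xb = (\<lambda>t. snd (p t)) ` {..n}"
  have "gen_rps_matrix Xb (rel_payoff \<pi>)"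
    unfolding gen_rps_matrix_def
  proof
    fix z assume "z \<in> Xb"
    then obtain t where t: "t \<le> n" "z = snd (p t)" unfolding Xb_def by blast
    obtain s where s: "s < n" "z = snd (p s)"
    proof (cases "t = n")
      case True thus ?thesis using that[of 0] t per npos by auto
    next
      case False thus ?thesis using that[of t] t by auto
    qed
    have "snd (p (Suc s)) \<in> Xb" using s unfolding Xb_def by auto
    moreover have "rel_payoff \<pi> (snd (p (Suc s))) z > 0" using im[OF s(1)] s by simp
    ultimately show "\<exists>x\<in>Xb. rel_payoff \<pi> x z > 0" by blast
  qed
  moreover have "Xb \<noteq> {}" unfolding Xb_def by auto
  moreover have "Xb \<subseteq> X" unfolding Xb_def using inX mem_Times_iff by fastforce
  ultimately show "gen_rps_game X (rel_payoff \<pi>)" unfolding gen_rps_game_def by blast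
qed

end
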